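(* There is a $\mathsf{conv}$-MAD family, i.e. a MAD family $\mathcal{A}$ on $\omega$ such that $\mathcal{I}(\mathcal{A})\not\leq_K\mathsf{conv}$.
   Context: A MAD family is a maximal family of infinite subsets of $\omega$ with pairwise finite intersections; $\mathcal{I}(\mathcal{A})$ is the ideal on $\omega$ generated by $\mathcal{A}$ and the finite sets. $\mathsf{conv}$ is the ideal on $[0,1]\cap\mathbb{Q}$ generated by all sequences (of rationals in $[0,1]$) converging to a real number. For an ideal $\mathcal{I}$ on $X$ and $\mathcal{J}$ on $Y$ ($X,Y$ countable), $\mathcal{I}\le_K\mathcal{J}$ means there is $f:Y\to X$ with $f^{-1}(A)\in\mathcal{J}$ for all $A\in\mathcal{I}$. *)

theory Defs
  imports Complex_Main
begin

definition almost_disjoint_family :: "nat set set \<Rightarrow> bool" where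
  "almost_disjoint_family \<A> \<longleftrightarrow>
     (\<forall>a\<in>\<A>. infinite a) \<and> (\<forall>a\<in>\<A>. \<forall>b\<in>\<A>. a \<noteq> b \<longrightarrow> finite (a \<inter> b))"

definition MAD_family :: "nat set set \<Rightarrow> bool" where
  "MAD_family \<A> \<longleftrightarrow>
     almost_disjoint_family \<A> \<and> infinite \<A> \<and>
     (\<forall>B. almost_disjoint_family (insert B \<A>) \<longrightarrow> B \<in> \<A>)"

definition generated_ideal :: "nat set set \<Rightarrow> nat set set" where
  "generated_ideal \<A> =
     {X. \<exists>F. finite F \<and> F \<subseteq> \<A> \<and> finite (X - \<Union>F)}"

definition Q01 :: "rat set" where
  "Q01 = {q. 0 \<le> q \<and> q \<le> 1}"

definition conv_seq :: "(nat \<Rightarrow> rat) \<Rightarrow> bool" where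
  "conv_seq s \<longleftrightarrow> range s \<subseteq> Q01 \<and> (\<exists>x::real. (\<lambda>n. of_rat (s n)) \<longlonglongrightarrow> x)"

definition conv_ideal :: "rat set set" where
  "conv_ideal =
     {X. X \<subseteq> Q01 \<and> (\<exists>S. finite S \<and> (\<forall>s\<in>S. conv_seq s) \<and> X \<subseteq> (\<Union>s\<in>S. range s))}"

definition katetov_le :: "'a set set \<Rightarrow> 'a set \<Rightarrow> 'b set set \<Rightarrow> 'b set \<Rightarrow> bool" where
  "katetov_le I X J Y \<longleftrightarrow>
     (\<exists>f. (\<forall>y\<in>Y. f y \<in> X) \<and> (\<forall>A\<in>I. {y\<in>Y. f y \<in> A} \<in> J))"

end

theory Submission
  imports Defs "HOL-Library.Countable"
begin

unbundle cardinal_syntax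


definition pre :: "(rat \<Rightarrow> nat) \<Rightarrow> nat set \<Rightarrow> rat set" where
  "pre f X = {y\<in>Q01. f y \<in> X}"

definition acc :: "rat set \<Rightarrow> real \<Rightarrow> bool" where
  "acc T L \<longleftrightarrow> (\<forall>e>0. infinite {q\<in>T. \<bar>real_of_rat q - L\<bar> < e})"

lemma acc_mono: assumes "acc X L" "X \<subseteq> Y" shows "acc Y L"
  unfolding acc_def
proof (intro allI impI)
  fix e :: real assume "0 < e"
  then have "infinite {q\<in>X. \<bar>real_of_rat q - L\<bar> < e}" using assms(1) unfolding acc_def by blast
  moreover have "{q\<in>X. \<bar>real_of_rat q - L\<bar> < e} \<subseteq> {q\<in>Y. \<bar>real_of_rat q - L\<bar> < e}" using assms(2) by blast
  ultimately show "infinite {q\<in>Y. \<bar>real_of_rat q - L\<bar> < e}" using finite_subset by blast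
qed

lemma acc_range:
  assumes lim: "(\<lambda>n. real_of_rat (s n)) \<longlonglongrightarrow> L" and inf: "infinite (B \<inter> range s)"
  shows "acc B L"
  unfolding acc_def
proof (intro allI impI)
  fix e :: real assume "e > 0"
  then obtain N where N: "\<forall>n\<ge>N. norm (real_of_rat (s n) - L) < e"
    using LIMSEQ_D[OF lim] by blast
  have "B \<inter> range s \<subseteq> s ` {..<N} \<union> {q\<in>B. \<bar>real_of_rat q - L\<bar> < e}"
  proof (rule subsetI)
    fix q assume "q \<in> B \<inter> range s"
    then obtain n where n: "q = s n" "q \<in> B" by auto
    show "q \<in> s ` {..<N} \<union> {q\<in>B. \<bar>real_of_rat q - L\<bar> < e}"
    proof (cases "n < N")
      case True then show ?thesis using n by auto
    next
      case False then show ?thesis using n N by auto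
    qed
  qed
  note sub = this
  show "infinite {q\<in>B. \<bar>real_of_rat q - L\<bar> < e}"
  proof
    assume "finite {q\<in>B. \<bar>real_of_rat q - L\<bar> < e}"
    then have "finite (s ` {..<N} \<union> {q\<in>B. \<bar>real_of_rat q - L\<bar> < e})" by simp
    then show False using inf finite_subset sub by blast
  qed
qed

lemma acc_unique_range:
  assumes lim: "(\<lambda>n. real_of_rat (s n)) \<longlonglongrightarrow> L'" and a: "acc (range s) L"
  shows "L = L'"
proof (rule ccontr)
  assume ne: "L \<noteq> L'"
  define e where "e = \<bar>L - L'\<bar> / 2"
  have e: "e > 0" using ne by (simp add: e_def)
  then obtain N where N: "\<forall>n\<ge>N. norm (real_of_rat (s n) - L') < e"
    using LIMSEQ_D[OF lim] by blast
  have "{q\<in>range s. \<bar>real_of_rat q - L\<bar> < e} \<subseteq> s ` {..<N}"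
  proof
    fix q assume q: "q \<in> {q\<in>range s. \<bar>real_of_rat q - L\<bar> < e}"
    then obtain n where n: "q = s n" by auto
    have "\<not> n \<ge> N"
    proof
      assume "n \<ge> N"
      then have "\<bar>real_of_rat q - L'\<bar> < e" using N n by auto
      moreover have "\<bar>real_of_rat q - L\<bar> < e" using q by auto
      moreover have "\<bar>L - L'\<bar> \<le> \<bar>real_of_rat q - L'\<bar> + \<bar>real_of_rat q - L\<bar>"
        using abs_triangle_ineq4[of "real_of_rat q - L'" "real_of_rat q - L"] by simp
      ultimately show False unfolding e_def by simp
    qed
    then show "q \<in> s ` {..<N}" using n by auto
  qed
  moreover have "finite (s ` {..<N})" by simp
  ultimately have "finite {q\<in>range s. \<bar>real_of_rat q - L\<bar> < e}" using finite_subset by blast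
  then show False using a e unfolding acc_def by blast
qed

lemma acc_Un: "acc (A \<union> B) L \<Longrightarrow> acc A L \<or> acc B L"
proof (rule ccontr)
  assume a: "acc (A \<union> B) L" and n: "\<not> (acc A L \<or> acc B L)"
  then obtain e1 e2 :: real where e: "e1 > 0" "e2 > 0"
    and f: "finite {q\<in>A. \<bar>real_of_rat q - L\<bar> < e1}" "finite {q\<in>B. \<bar>real_of_rat q - L\<bar> < e2}"
    unfolding acc_def by blast
  have "{q\<in>A \<union> B. \<bar>real_of_rat q - L\<bar> < min e1 e2} \<subseteq>
     {q\<in>A. \<bar>real_of_rat q - L\<bar> < e1} \<union> {q\<in>B. \<bar>real_of_rat q - L\<bar> < e2}" by auto
  then show False using a e f unfolding acc_def
    by (meson finite_UnI finite_subset min_less_iff_conj)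
qed

lemma acc_empty: "\<not> acc {} L"
proof
  assume "acc {} L"
  then have "infinite {q\<in>{}. \<bar>real_of_rat q - L\<bar> < 1}" unfolding acc_def using zero_less_one by blast
  then show False by simp
qed

lemma acc_UN:
  assumes "finite S" shows "acc (\<Union>s\<in>S. R s) L \<Longrightarrow> \<exists>s\<in>S. acc (R s) L"
  using assms
proof (induction S rule: finite_induct)
  case empty then show ?case using acc_empty by simp
next
  case (insert x F)
  then show ?case using acc_Un[of "R x" "\<Union>s\<in>F. R s" L] by auto
qed

lemma conv_seq_lim: "conv_seq s \<Longrightarrow> (\<lambda>n. real_of_rat (s n)) \<longlonglongrightarrow> lim (\<lambda>n. real_of_rat (s n))"
  unfolding conv_seq_def using limI by blast

lemma conv_finite_acc:
  assumes "X \<in> conv_ideal" shows "finite {L. acc X L}"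
proof -
  obtain S where S: "finite S" "\<forall>s\<in>S. conv_seq s" "X \<subseteq> (\<Union>s\<in>S. range s)"
    using assms unfolding conv_ideal_def by blast
  have "{L. acc X L} \<subseteq> (\<lambda>s. lim (\<lambda>n. real_of_rat (s n))) ` S"
  proof
    fix L assume "L \<in> {L. acc X L}"
    then have "acc (\<Union>s\<in>S. range s) L" using S(3) acc_mono by blast
    then obtain s where s: "s \<in> S" "acc (range s) L" using acc_UN[OF S(1)] by blast
    have "conv_seq s" using S(2) s(1) by blast
    from acc_unique_range[OF conv_seq_lim[OF this] s(2)]
    have "L = lim (\<lambda>n. real_of_rat (s n))" .
    then show "L \<in> (\<lambda>s. lim (\<lambda>n. real_of_rat (s n))) ` S" using s by blast
  qed
  then show ?thesis using S(1) finite_subset by blast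
qed

lemma conv_infinite_acc:
  assumes "X \<in> conv_ideal" "infinite X" shows "\<exists>L. acc X L"
proof -
  obtain S where S: "finite S" "\<forall>s\<in>S. conv_seq s" "X \<subseteq> (\<Union>s\<in>S. range s)"
    using assms unfolding conv_ideal_def by blast
  have "X = (\<Union>s\<in>S. X \<inter> range s)" using S(3) by auto
  have "\<exists>s\<in>S. infinite (X \<inter> range s)"
  proof (rule ccontr)
    assume "\<not> ?thesis"
    then have "finite (\<Union>s\<in>S. X \<inter> range s)" using S(1) by (intro finite_UN_I) auto
    then show False using assms(2) \<open>X = _\<close> by simp
  qed
  then obtain s where s: "s \<in> S" "infinite (X \<inter> range s)" by blast
  have "conv_seq s" using S(2) s(1) by blast
  from acc_range[OF conv_seq_lim[OF this] s(2)] show ?thesis by blast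
qed

lemma conv_down: assumes "X \<in> conv_ideal" "Y \<subseteq> X" shows "Y \<in> conv_ideal"
proof -
  obtain S where S: "X \<subseteq> Q01" "finite S" "\<forall>s\<in>S. conv_seq s" "X \<subseteq> (\<Union>s\<in>S. range s)"
    using assms(1) unfolding conv_ideal_def by blast
  have "Y \<subseteq> Q01" "Y \<subseteq> (\<Union>s\<in>S. range s)" using S(1,4) assms(2) by auto
  then show ?thesis unfolding conv_ideal_def using S(2,3) by blast
qed

lemma not_conv: assumes "\<And>n::nat. acc T (L n)" "inj L" shows "T \<notin> conv_ideal"
proof
  assume "T \<in> conv_ideal"
  then have "finite {L. acc T L}" by (rule conv_finite_acc)
  moreover have "range L \<subseteq> {L. acc T L}" using assms(1) by auto
  ultimately have "finite (range L)" using finite_subset by blast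
  then show False using assms(2) finite_imageD infinite_UNIV_nat by blast
qed

lemma acc_strict:
  assumes lim: "(\<lambda>n. real_of_rat (s n)) \<longlonglongrightarrow> L" and lt: "\<And>n. real_of_rat (s n) < L"
  shows "acc (range s) L"
  unfolding acc_def
proof (intro allI impI notI)
  fix e :: real assume e: "e > 0" and fin: "finite {q\<in>range s. \<bar>real_of_rat q - L\<bar> < e}"
  let ?F = "{q\<in>range s. \<bar>real_of_rat q - L\<bar> < e}"
  obtain N where N: "\<forall>n\<ge>N. norm (real_of_rat (s n) - L) < e"
    using LIMSEQ_D[OF lim e] by blast
  have ne: "?F \<noteq> {}" using N by auto
  define d where "d = Min ((\<lambda>q. L - real_of_rat q) ` ?F)"
  have dpos: "d > 0" unfolding d_def using fin ne lt by (auto simp: Min_gr_iff)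
  obtain N' where N': "\<forall>n\<ge>N'. norm (real_of_rat (s n) - L) < min e d"
    using LIMSEQ_D[OF lim, of "min e d"] dpos e by auto
  have "s N' \<in> ?F" using N'[rule_format, of N'] by auto
  then have "d \<le> L - real_of_rat (s N')" unfolding d_def using fin by (auto intro: Min_le)
  moreover have "\<bar>real_of_rat (s N') - L\<bar> < d" using N'[rule_format, of N'] by auto
  ultimately show False by linarith
qed


definition V :: "(nat \<Rightarrow> bool) \<Rightarrow> nat \<Rightarrow> rat" where
  "V b m = (\<Sum>i<m. if b i then 2 / 3 ^ Suc i else 0)"

lemma V_Suc: "V b (Suc m) = V b m + (if b m then 2 / 3 ^ Suc m else 0)"
  unfolding V_def by simp

lemma V_tail: "n \<le> m \<Longrightarrow> 0 \<le> V b m - V b n \<and> V b m - V b n \<le> 1 / 3 ^ n - 1 / 3 ^ m"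
proof (induction m rule: dec_induct)
  case base then show ?case by simp
next
  case (step m)
  have h1: "(1::rat) / 3 ^ n - 1 / 3 ^ m + 2 / 3 ^ Suc m = 1 / 3 ^ n - 1 / 3 ^ Suc m"
    by (simp add: field_simps)
  have h2: "(1::rat) / 3 ^ Suc m \<le> 1 / 3 ^ m" by (simp add: field_simps)
  have h3: "(0::rat) \<le> 2 / 3 ^ Suc m" by simp
  show ?case
  proof (cases "b m")
    case True
    then have "V b (Suc m) - V b n = (V b m - V b n) + 2 / 3 ^ Suc m" by (simp add: V_Suc)
    then show ?thesis using step.IH h1 h3 by linarith
  next
    case False
    then have "V b (Suc m) - V b n = (V b m - V b n)" by (simp add: V_Suc)
    then show ?thesis using step.IH h2 by linarith
  qed
qed

lemma V_mono: "n \<le> m \<Longrightarrow> V b n \<le> V b m"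
  using V_tail[of n m b] by simp

lemma V_bounds: "0 \<le> V b m \<and> V b m \<le> 1"
proof -
  have "V b 0 = 0" unfolding V_def by simp
  moreover have "(0::rat) \<le> 1 / 3 ^ m" by simp
  moreover have "(1::rat) / 3 ^ 0 = 1" by simp
  moreover have "0 \<le> V b m - V b 0 \<and> V b m - V b 0 \<le> 1 / 3 ^ 0 - 1 / 3 ^ m" using V_tail[of 0 m b] by blast
  ultimately show ?thesis by linarith
qed

lemma V_eq: "(\<And>i. i < m \<Longrightarrow> b i = b' i) \<Longrightarrow> V b m = V b' m"
  unfolding V_def by (rule sum.cong) auto

lemma V_sep_least:
  assumes d: "b j \<noteq> b' j" and eq: "\<And>i. i < j \<Longrightarrow> b i = b' i" and m: "j < m" "j < m'"
  shows "1 / 3 ^ Suc j < \<bar>V b m - V b' m'\<bar>"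
proof -
  have e: "V b j = V b' j" using V_eq eq by blast
  have t1: "0 \<le> V b m - V b (Suc j)" "V b m - V b (Suc j) \<le> 1 / 3 ^ Suc j - 1 / 3 ^ m"
    using V_tail[of "Suc j" m b] m by auto
  have t2: "0 \<le> V b' m' - V b' (Suc j)" "V b' m' - V b' (Suc j) \<le> 1 / 3 ^ Suc j - 1 / 3 ^ m'"
    using V_tail[of "Suc j" m' b'] m by auto
  have p: "(0::rat) < 1 / 3 ^ m" "(0::rat) < 1 / 3 ^ m'" by auto
  show ?thesis
  proof (cases "b j")
    case True
    then have "\<not> b' j" using d by simp
    then have "V b m - V b' m' = 2 / 3 ^ Suc j + (V b m - V b (Suc j)) - (V b' m' - V b' (Suc j))"
      using True e by (simp add: V_Suc)
    then show ?thesis using t1 t2 p by linarith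
  next
    case False
    then have "b' j" using d by simp
    then have "V b' m' - V b m = 2 / 3 ^ Suc j + (V b' m' - V b' (Suc j)) - (V b m - V b (Suc j))"
      using False e by (simp add: V_Suc)
    then show ?thesis using t1 t2 p by linarith
  qed
qed

lemma V_sep:
  assumes "j \<le> J" "b j \<noteq> b' j" "J < m" "J < m'"
  shows "1 / 3 ^ Suc J \<le> \<bar>real_of_rat (V b m) - real_of_rat (V b' m')\<bar>"
proof -
  obtain j0 where j0: "b j0 \<noteq> b' j0" "\<And>i. i < j0 \<Longrightarrow> b i = b' i" "j0 \<le> j"
    using exists_least_iff[of "\<lambda>i. b i \<noteq> b' i"] assms(2)
    by (metis not_le_imp_less)
  have "1 / 3 ^ Suc j0 < \<bar>V b m - V b' m'\<bar>"
    using V_sep_least[of b j0 b' m m', OF j0(1) j0(2)] j0(3) assms by simp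
  moreover have "(1::rat) / 3 ^ Suc J \<le> 1 / 3 ^ Suc j0"
    using j0(3) assms(1) by (intro divide_left_mono power_increasing) auto
  ultimately have "(1::rat) / 3 ^ Suc J \<le> \<bar>V b m - V b' m'\<bar>" by linarith
  then have "real_of_rat (1 / 3 ^ Suc J) \<le> real_of_rat \<bar>V b m - V b' m'\<bar>"
    using of_rat_less_eq by blast
  then show ?thesis by (simp add: of_rat_divide of_rat_power of_rat_mult abs_of_rat[symmetric] of_rat_diff del: abs_of_rat)
qed

lemma V_finite: "finite {V b m | b m. m \<le> J}"
proof -
  have "{V b m | b m. m \<le> J} \<subseteq> (\<lambda>s. V (\<lambda>i. i \<in> s) J) ` Pow {..<J}"
  proof
    fix x assume "x \<in> {V b m | b m. m \<le> J}"
    then obtain b m where x: "x = V b m" "m \<le> J" by blast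
    define s where "s = {i. i < m \<and> b i}"
    have "V (\<lambda>i. i \<in> s) J = V (\<lambda>i. i \<in> s) m"
    proof -
      have "(\<Sum>i<J. if i \<in> s then 2 / 3 ^ Suc i else (0::rat)) = (\<Sum>i<m. if i \<in> s then 2 / 3 ^ Suc i else 0)"
        using x(2) by (intro sum.mono_neutral_right) (auto simp: s_def)
      then show ?thesis unfolding V_def .
    qed
    also have "\<dots> = V b m" by (rule V_eq) (auto simp: s_def)
    finally have "x = V (\<lambda>i. i \<in> s) J" using x by simp
    moreover have "s \<in> Pow {..<J}" using x(2) by (auto simp: s_def)
    ultimately show "x \<in> (\<lambda>s. V (\<lambda>i. i \<in> s) J) ` Pow {..<J}" by blast
  qed
  then show ?thesis by (rule finite_subset) simp
qed

lemma sep_acc: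
  assumes "finite E" "finite E'" "(0::real) < d"
    and sep: "\<And>q q'. q \<in> X - E \<Longrightarrow> q' \<in> Y - E' \<Longrightarrow> d \<le> \<bar>real_of_rat q - real_of_rat q'\<bar>"
    and "acc X L" "acc Y L"
  shows False
proof -
  have hd: "0 < d/2" using assms(3) by simp
  have "infinite {q\<in>X. \<bar>real_of_rat q - L\<bar> < d/2}" using assms(5)[unfolded acc_def, rule_format, OF hd] .
  then have "infinite ({q\<in>X. \<bar>real_of_rat q - L\<bar> < d/2} - E)" using assms(1) by simp
  then obtain q where q: "q \<in> X - E" "\<bar>real_of_rat q - L\<bar> < d/2"
    using infinite_imp_nonempty by blast
  have "infinite {q\<in>Y. \<bar>real_of_rat q - L\<bar> < d/2}" using assms(6)[unfolded acc_def, rule_format, OF hd] .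
  then have "infinite ({q\<in>Y. \<bar>real_of_rat q - L\<bar> < d/2} - E')" using assms(2) by simp
  then obtain q' where q': "q' \<in> Y - E'" "\<bar>real_of_rat q' - L\<bar> < d/2"
    using infinite_imp_nonempty by blast
  have "d \<le> \<bar>real_of_rat q - real_of_rat q'\<bar>" using sep q(1) q'(1) .
  moreover have "\<bar>real_of_rat q - real_of_rat q'\<bar> \<le> \<bar>real_of_rat q - L\<bar> + \<bar>real_of_rat q' - L\<bar>"
    using abs_triangle_ineq4[of "real_of_rat q - L" "real_of_rat q' - L"] by simp
  ultimately show False using q(2) q'(2) by linarith
qed


lemma V_family_sep:
  assumes X: "\<And>q. q \<in> X \<Longrightarrow> \<exists>b m. q = V b m \<and> P b"
    and Y: "\<And>q. q \<in> Y \<Longrightarrow> \<exists>b m. q = V b m \<and> Q b"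
    and PQ: "\<And>b b'. P b \<Longrightarrow> Q b' \<Longrightarrow> b J \<noteq> b' J"
    and "acc X L" "acc Y L"
  shows False
proof -
  let ?E = "{V b m | b m. m \<le> J}"
  have sep: "1 / 3 ^ Suc J \<le> \<bar>real_of_rat q - real_of_rat q'\<bar>" if q: "q \<in> X - ?E" and q': "q' \<in> Y - ?E" for q q'
  proof -
    obtain b m where bm: "q = V b m" "P b" using X q by blast
    obtain b' m' where bm': "q' = V b' m'" "Q b'" using Y q' by blast
    have "J < m"
    proof (rule ccontr)
      assume "\<not> J < m" then have "m \<le> J" by simp
      then have "q \<in> ?E" using bm(1) by blast
      with q show False by blast
    qed
    moreover have "J < m'"
    proof (rule ccontr)
      assume "\<not> J < m'" then have "m' \<le> J" by simp
      then have "q' \<in> ?E" using bm'(1) by blast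
      with q' show False by blast
    qed
    ultimately show ?thesis using V_sep[of J J b b' m m'] PQ bm bm' by simp
  qed
  show False
    by (rule sep_acc[OF V_finite V_finite _ sep assms(4,5)]) simp
qed

definition bz :: "nat set \<Rightarrow> nat \<Rightarrow> nat \<Rightarrow> bool" where
  "bz z k j = (if even j then j div 2 \<in> z else j div 2 \<noteq> k)"

definition T :: "nat set \<Rightarrow> rat set" where
  "T z = {V (bz z k) m | k m. True}"

lemma T_Q01: "T z \<subseteq> Q01"
  unfolding T_def Q01_def using V_bounds by auto

lemma U_acc: "\<exists>L. acc (range (V (bz z k))) L"
proof -
  let ?b = "bz z k"
  let ?x = "\<lambda>m. real_of_rat (V ?b m)"
  have inc: "incseq ?x" by (rule incseq_SucI) (simp add: of_rat_less_eq V_mono)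
  have bd: "\<forall>i. ?x i \<le> 1" using V_bounds by (simp add: of_rat_less_eq[of _ 1, simplified])
  obtain L where L: "?x \<longlonglongrightarrow> L" "\<forall>i. ?x i \<le> L" using incseq_convergent[OF inc bd] by blast
  have lt: "?x n < L" for n
  proof -
    define j where "j = n + k + 1"
    have bj: "?b (Suc (2 * j))" unfolding bz_def j_def by simp
    have "V ?b n \<le> V ?b (Suc (2 * j))" by (rule V_mono) (simp add: j_def)
    also have "\<dots> < V ?b (Suc (Suc (2 * j)))" using bj by (simp add: V_Suc del: power_Suc)
    finally have "?x n < ?x (Suc (Suc (2 * j)))" by (simp add: of_rat_less)
    then show ?thesis using L(2) by (meson less_le_trans)
  qed
  show ?thesis using acc_strict[OF L(1) lt] by blast
qed

lemma U_sep:
  assumes "k \<noteq> k'" "acc (range (V (bz z k))) L" "acc (range (V (bz z k'))) L"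
  shows False
proof (rule V_family_sep[where X = "range (V (bz z k))" and Y = "range (V (bz z k'))" and P = "\<lambda>b. b = bz z k" and Q = "\<lambda>b. b = bz z k'" and J = "Suc (2 * k)"])
  show "\<And>b b'. b = bz z k \<Longrightarrow> b' = bz z k' \<Longrightarrow> b (Suc (2 * k)) \<noteq> b' (Suc (2 * k))"
    using assms(1) by (simp add: bz_def)
qed (use assms in auto)

lemma T_sep:
  assumes "z \<noteq> z'" "acc (T z) L" "acc (T z') L"
  shows False
proof -
  obtain p where p: "(p \<in> z) \<noteq> (p \<in> z')" using assms(1) by blast
  show False
  proof (rule V_family_sep[where X = "T z" and Y = "T z'" and P = "\<lambda>b. \<exists>k. b = bz z k" and Q = "\<lambda>b. \<exists>k. b = bz z' k" and J = "2 * p"])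
    show "\<And>b b'. \<exists>k. b = bz z k \<Longrightarrow> \<exists>k. b' = bz z' k \<Longrightarrow> b (2 * p) \<noteq> b' (2 * p)"
      using p by (auto simp: bz_def)
  qed (use assms in \<open>auto simp: T_def\<close>)
qed

lemma T_not_conv: "T z \<notin> conv_ideal"
proof -
  obtain L where L: "\<And>k. acc (range (V (bz z k))) (L k)" using U_acc by metis
  have "inj L"
  proof (rule injI)
    fix k k' assume "L k = L k'"
    then show "k = k'" using U_sep[of k k' z "L k"] L by metis
  qed
  moreover have "acc (T z) (L k)" for k
    by (rule acc_mono[OF L]) (auto simp: T_def)
  ultimately show ?thesis using not_conv by blast
qed


lemma fin_less_inf: "finite A \<Longrightarrow> infinite B \<Longrightarrow> |A| <o |B|"
  using finite_ordLess_infinite[OF card_of_Well_order card_of_Well_order] by (simp add: Field_card_of)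

lemma infinite_nat_set_set: "infinite (UNIV :: nat set set)"
proof
  assume "finite (UNIV :: nat set set)"
  then have "finite (range (\<lambda>n::nat. {n}))" by (rule finite_subset[rotated]) simp
  moreover have "inj (\<lambda>n::nat. {n})" by (rule injI) simp
  ultimately have "finite (UNIV :: nat set)" by (rule finite_imageD)
  then show False by simp
qed

lemma union_small:
  fixes Bl :: "nat set \<Rightarrow> nat set set"
  assumes card: "|S| <o |UNIV :: nat set set|" and fin: "\<And>a. a \<in> S \<Longrightarrow> finite (Bl a)"
  shows "|\<Union>a\<in>S. Bl a| <o |UNIV :: nat set set|"
proof (cases "finite S")
  case True
  then have "finite (\<Union>a\<in>S. Bl a)" using fin by (intro finite_UN_I)
  then show ?thesis using fin_less_inf[OF _ infinite_nat_set_set] by blast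
next
  case False
  have "|\<Union>a\<in>S. Bl a| \<le>o |S|"
  proof (rule card_of_UNION_ordLeq_infinite[OF False])
    show "|S| \<le>o |S|" by (rule ordLeq_refl[OF card_of_Card_order])
    show "\<forall>a\<in>S. |Bl a| \<le>o |S|"
    proof
      fix a assume "a \<in> S"
      then have "|Bl a| <o |S|" using fin_less_inf[OF fin False] by blast
      then show "|Bl a| \<le>o |S|" by (rule ordLess_imp_ordLeq)
    qed
  qed
  then show ?thesis using ordLeq_ordLess_trans[OF _ card] by blast
qed

lemma step:
  fixes f :: "rat \<Rightarrow> nat" and S :: "nat set set"
  assumes good: "\<And>F. finite F \<Longrightarrow> pre f F \<in> conv_ideal"
    and card: "|S| <o |UNIV :: nat set set|"
    and conv: "\<And>a. a \<in> S \<Longrightarrow> pre f a \<in> conv_ideal"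
  shows "\<exists>a. infinite a \<and> (\<forall>b\<in>S. finite (a \<inter> b)) \<and> pre f a \<notin> conv_ideal"
proof -
  define Bl where "Bl a = {z. infinite (a \<inter> f ` T z)}" for a
  have finBl: "finite (Bl a)" if aS: "a \<in> S" for a
  proof -
    have ex: "\<forall>z\<in>Bl a. \<exists>L. acc (pre f a) L \<and> acc (T z) L"
    proof
      fix z assume "z \<in> Bl a"
      then have inf: "infinite (a \<inter> f ` T z)" unfolding Bl_def by simp
      have "a \<inter> f ` T z \<subseteq> f ` (pre f a \<inter> T z)" using T_Q01 unfolding pre_def by auto
      note sub1 = this
      have inf2: "infinite (pre f a \<inter> T z)"
      proof
        assume "finite (pre f a \<inter> T z)"
        then have "finite (f ` (pre f a \<inter> T z))" by (rule finite_imageI)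
        then have "finite (a \<inter> f ` T z)" by (rule finite_subset[OF sub1])
        then show False using inf by contradiction
      qed
      have "pre f a \<inter> T z \<in> conv_ideal" using conv_down[OF conv[OF aS]] by blast
      then obtain L where "acc (pre f a \<inter> T z) L" using conv_infinite_acc inf2 by blast
      then have "acc (pre f a) L" "acc (T z) L" using acc_mono by blast+
      then show "\<exists>L. acc (pre f a) L \<and> acc (T z) L" by blast
    qed
    then obtain Lf where Lf: "\<forall>z\<in>Bl a. acc (pre f a) (Lf z) \<and> acc (T z) (Lf z)"
      using bchoice[OF ex] by blast
    have "inj_on Lf (Bl a)"
    proof (rule inj_onI)
      fix z z' assume "z \<in> Bl a" "z' \<in> Bl a" "Lf z = Lf z'"
      show "z = z'"
      proof (rule ccontr)
        assume "z \<noteq> z'"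
        moreover have "acc (T z) (Lf z)" "acc (T z') (Lf z)" using Lf \<open>z \<in> Bl a\<close> \<open>z' \<in> Bl a\<close> \<open>Lf z = Lf z'\<close> by auto
        ultimately show False using T_sep by blast
      qed
    qed
    moreover have "Lf ` Bl a \<subseteq> {L. acc (pre f a) L}" using Lf by blast
    moreover have "finite {L. acc (pre f a) L}" using conv_finite_acc conv[OF aS] by blast
    ultimately show ?thesis using inj_on_finite by blast
  qed
  have "(\<Union>a\<in>S. Bl a) \<noteq> UNIV"
  proof
    assume eq: "(\<Union>a\<in>S. Bl a) = UNIV"
    have "|\<Union>a\<in>S. Bl a| <o |UNIV :: nat set set|" by (rule union_small[OF card]) (rule finBl)
    then have "|UNIV :: nat set set| <o |UNIV :: nat set set|" by (simp only: eq)
    then show False using ordLess_irreflexive by blast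
  qed
  then obtain z where z: "z \<notin> (\<Union>a\<in>S. Bl a)" by blast
  define a where "a = f ` T z"
  have sub: "T z \<subseteq> pre f a" using T_Q01 unfolding pre_def a_def by auto
  have "infinite a"
  proof
    assume "finite a"
    then have "pre f a \<in> conv_ideal" by (rule good)
    then have "T z \<in> conv_ideal" using conv_down sub by blast
    then show False using T_not_conv by blast
  qed
  moreover have "\<forall>b\<in>S. finite (a \<inter> b)"
  proof
    fix b assume "b \<in> S"
    then have "z \<notin> Bl b" using z by blast
    then have "finite (b \<inter> f ` T z)" unfolding Bl_def by simp
    then show "finite (a \<inter> b)" unfolding a_def by (simp add: Int_commute)
  qed
  moreover have "pre f a \<notin> conv_ideal" using conv_down sub T_not_conv by blast
  ultimately show ?thesis by blast
qed


definition Pk :: "nat \<Rightarrow> nat set" where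
  "Pk k = {n. fst (prod_decode n) = k}"

lemma Pk_inf: "infinite (Pk k)"
proof
  assume fin: "finite (Pk k)"
  have "range (\<lambda>m. prod_encode (k, m)) \<subseteq> Pk k" unfolding Pk_def by auto
  then have "finite (range (\<lambda>m. prod_encode (k, m)))" using fin by (rule finite_subset)
  moreover have "inj (\<lambda>m. prod_encode (k, m))" by (rule injI) simp
  ultimately have "finite (UNIV :: nat set)" by (rule finite_imageD)
  then show False by simp
qed

lemma Pk_disj: "k \<noteq> k' \<Longrightarrow> Pk k \<inter> Pk k' = {}"
  unfolding Pk_def by auto

lemma Pk_inj: "inj Pk"
proof (rule injI)
  fix k k' assume eq: "Pk k = Pk k'"
  show "k = k'"
  proof (rule ccontr)
    assume "k \<noteq> k'"
    then have "Pk k = {}" using Pk_disj[of k k'] eq by simp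
    then show False using Pk_inf[of k] by simp
  qed
qed

lemma Pk_small: "|range Pk| <o |UNIV :: nat set set|"
proof -
  have "|range Pk| \<le>o |UNIV :: nat set|" by (rule card_of_image)
  moreover have "|UNIV :: nat set| <o |Pow (UNIV :: nat set)|" by (rule card_of_Pow)
  ultimately show ?thesis by (simp add: ordLeq_ordLess_trans)
qed

lemma fun_small: "|UNIV :: (rat \<Rightarrow> nat) set| \<le>o |UNIV :: nat set set|"
proof -
  define enc where "enc g = range (\<lambda>q. prod_encode (to_nat q, g q))" for g :: "rat \<Rightarrow> nat"
  have "inj enc"
  proof (rule injI)
    fix g g' assume eq: "enc g = enc g'"
    show "g = g'"
    proof
      fix q
      have "prod_encode (to_nat q, g q) \<in> enc g'" using eq unfolding enc_def by auto
      then obtain q' where "prod_encode (to_nat q, g q) = prod_encode (to_nat q', g' q')"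
        unfolding enc_def by blast
      then have pe: "(to_nat q, g q) = (to_nat q', g' q')" by (rule injD[OF inj_prod_encode[of UNIV]])
      have e1: "to_nat q = to_nat q'" using arg_cong[OF pe, of fst] by simp
      have e2: "g q = g' q'" using arg_cong[OF pe, of snd] by simp
      have "q = q'" using e1 by (rule injD[OF inj_to_nat])
      then show "g q = g' q" using e2 by simp
    qed
  qed
  then show ?thesis using card_of_ordLeq[of UNIV UNIV] by blast
qed

definition good :: "(rat \<Rightarrow> nat) \<Rightarrow> bool" where
  "good f \<longleftrightarrow> (\<forall>F. finite F \<longrightarrow> pre f F \<in> conv_ideal)"

abbreviation RR :: "((rat \<Rightarrow> nat) \<times> (rat \<Rightarrow> nat)) set" where
  "RR \<equiv> |UNIV :: (rat \<Rightarrow> nat) set|"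

definition SS :: "((rat \<Rightarrow> nat) \<Rightarrow> nat set option) \<Rightarrow> (rat \<Rightarrow> nat) \<Rightarrow> nat set set" where
  "SS D f = range Pk \<union> {a. \<exists>g\<in>underS RR f. D g = Some a}"

definition HH :: "((rat \<Rightarrow> nat) \<Rightarrow> nat set option) \<Rightarrow> (rat \<Rightarrow> nat) \<Rightarrow> nat set option" where
  "HH D f = (if good f \<and> (\<forall>a\<in>SS D f. pre f a \<in> conv_ideal)
     then Some (SOME a. infinite a \<and> (\<forall>b\<in>SS D f. finite (a \<inter> b)) \<and> pre f a \<notin> conv_ideal)
     else None)"

lemma RR_wo: "wo_rel RR"
  by (rule Card_order_wo_rel[OF card_of_Card_order])

lemma SS_small: "|SS D f| <o |UNIV :: nat set set|"
proof -
  have sub: "SS D f \<subseteq> range Pk \<union> (the \<circ> D) ` underS RR f"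
    unfolding SS_def by force
  have "|(the \<circ> D) ` underS RR f| \<le>o |underS RR f|" by (rule card_of_image)
  moreover have "|underS RR f| <o RR"
    by (rule card_of_underS[OF card_of_Card_order]) (simp add: Field_card_of)
  ultimately have "|(the \<circ> D) ` underS RR f| <o |UNIV :: nat set set|"
    using fun_small ordLeq_ordLess_trans ordLess_ordLeq_trans by metis
  then have "|range Pk \<union> (the \<circ> D) ` underS RR f| <o |UNIV :: nat set set|"
    by (rule card_of_Un_ordLess_infinite[OF infinite_nat_set_set Pk_small])
  moreover have "|SS D f| \<le>o |range Pk \<union> (the \<circ> D) ` underS RR f|"
    by (rule card_of_mono1[OF sub])
  ultimately show ?thesis using ordLeq_ordLess_trans by blast
qed

lemma HH_adm: "wo_rel.adm_wo RR HH"
  unfolding wo_rel.adm_wo_def[OF RR_wo]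
proof (intro allI impI)
  fix D D' :: "(rat \<Rightarrow> nat) \<Rightarrow> nat set option" and f
  assume "\<forall>y\<in>underS RR f. D y = D' y"
  then have "SS D f = SS D' f" unfolding SS_def by force
  then show "HH D f = HH D' f" unfolding HH_def by simp
qed

definition DD :: "(rat \<Rightarrow> nat) \<Rightarrow> nat set option" where
  "DD = wo_rel.worec RR HH"

lemma DD_fix: "DD f = HH DD f"
  using wo_rel.worec_fixpoint[OF RR_wo HH_adm] unfolding DD_def by metis

lemma DD_Some:
  assumes "DD f = Some a"
  shows "infinite a \<and> (\<forall>b\<in>SS DD f. finite (a \<inter> b)) \<and> pre f a \<notin> conv_ideal"
proof -
  have c: "good f \<and> (\<forall>a\<in>SS DD f. pre f a \<in> conv_ideal)"
    using assms DD_fix[of f] unfolding HH_def by (metis option.distinct(1))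
  then have a: "a = (SOME a. infinite a \<and> (\<forall>b\<in>SS DD f. finite (a \<inter> b)) \<and> pre f a \<notin> conv_ideal)"
    using assms DD_fix[of f] unfolding HH_def by simp
  have "\<exists>a. infinite a \<and> (\<forall>b\<in>SS DD f. finite (a \<inter> b)) \<and> pre f a \<notin> conv_ideal"
    by (rule step) (use c SS_small in \<open>auto simp: good_def\<close>)
  then show ?thesis unfolding a by (rule someI_ex)
qed

definition GG :: "nat set set" where
  "GG = range Pk \<union> {a. \<exists>g. DD g = Some a}"

lemma SS_GG: "SS DD f \<subseteq> GG"
  unfolding SS_def GG_def by blast

lemma GG_good: "good f \<Longrightarrow> \<exists>a\<in>GG. pre f a \<notin> conv_ideal"
proof (cases "\<forall>a\<in>SS DD f. pre f a \<in> conv_ideal")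
  case True
  assume g: "good f"
  define a where "a = (SOME a. infinite a \<and> (\<forall>b\<in>SS DD f. finite (a \<inter> b)) \<and> pre f a \<notin> conv_ideal)"
  have "DD f = Some a" using DD_fix[of f] g True unfolding HH_def a_def by simp
  then show ?thesis using DD_Some unfolding GG_def by blast
next
  case False
  then show ?thesis using SS_GG by blast
qed

lemma GG_AD: "almost_disjoint_family GG"
  unfolding almost_disjoint_family_def
proof (intro conjI ballI impI)
  fix a assume "a \<in> GG"
  then show "infinite a" unfolding GG_def using Pk_inf DD_Some by blast
next
  fix a b assume a: "a \<in> GG" and b: "b \<in> GG" and ne: "a \<noteq> b"
  have one: "finite (a \<inter> b)" if "DD g = Some a" "b \<in> SS DD g" for a b g
    using DD_Some that by blast
  show "finite (a \<inter> b)"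
  proof (cases "a \<in> range Pk")
    case ca: True
    show ?thesis
    proof (cases "b \<in> range Pk")
      case True
      then show ?thesis using ca ne Pk_disj by (metis finite.emptyI image_iff)
    next
      case False
      then obtain g where "DD g = Some b" using b unfolding GG_def by blast
      moreover have "a \<in> SS DD g" using ca unfolding SS_def by blast
      ultimately have "finite (b \<inter> a)" using one by blast
      then show ?thesis by (simp add: Int_commute)
    qed
  next
    case False
    then obtain g where ga: "DD g = Some a" using a unfolding GG_def by blast
    show ?thesis
    proof (cases "b \<in> range Pk")
      case True
      then have "b \<in> SS DD g" unfolding SS_def by blast
      then show ?thesis using one ga by blast
    next
      case False
      then obtain g' where gb: "DD g' = Some b" using b unfolding GG_def by blast
      have "g \<noteq> g'" using ga gb ne by auto
      have "(g, g') \<in> RR \<or> (g', g) \<in> RR"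
        using wo_rel.TOTALS[OF RR_wo] by (simp add: Field_card_of)
      then show ?thesis
      proof
        assume "(g, g') \<in> RR"
        then have "g \<in> underS RR g'" using \<open>g \<noteq> g'\<close> unfolding underS_def by simp
        then have "a \<in> SS DD g'" using ga unfolding SS_def by blast
        then have "finite (b \<inter> a)" using one gb by blast
        then show ?thesis by (simp add: Int_commute)
      next
        assume "(g', g) \<in> RR"
        then have "g' \<in> underS RR g" using \<open>g \<noteq> g'\<close> unfolding underS_def by simp
        then have "b \<in> SS DD g" using gb unfolding SS_def by blast
        then show ?thesis using one ga by blast
      qed
    qed
  qed
qed


lemma AD_union_chain:
  assumes C: "C \<in> chains {A. almost_disjoint_family A \<and> GG \<subseteq> A}" and ne: "C \<noteq> {}"
  shows "almost_disjoint_family (\<Union>C)"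
  unfolding almost_disjoint_family_def
proof (intro conjI ballI impI)
  have mem: "\<And>A. A \<in> C \<Longrightarrow> almost_disjoint_family A" using C unfolding chains_def by blast
  fix a assume "a \<in> \<Union>C"
  then obtain A where "A \<in> C" "a \<in> A" by blast
  then show "infinite a" using mem unfolding almost_disjoint_family_def by blast
next
  have mem: "\<And>A. A \<in> C \<Longrightarrow> almost_disjoint_family A" using C unfolding chains_def by blast
  have ch: "chain\<^sub>\<subseteq> C" using C unfolding chains_def by blast
  fix a b assume a: "a \<in> \<Union>C" and b: "b \<in> \<Union>C" and ne: "a \<noteq> b"
  obtain A where A: "A \<in> C" "a \<in> A" using a by blast
  obtain B where B: "B \<in> C" "b \<in> B" using b by blast
  have "A \<subseteq> B \<or> B \<subseteq> A" using ch A(1) B(1) unfolding chain_subset_def by blast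
  then show "finite (a \<inter> b)"
  proof
    assume "A \<subseteq> B"
    then have "a \<in> B" using A by blast
    then show ?thesis using mem[OF B(1)] B(2) ne unfolding almost_disjoint_family_def by blast
  next
    assume "B \<subseteq> A"
    then have "b \<in> A" using B by blast
    then show ?thesis using mem[OF A(1)] A(2) ne unfolding almost_disjoint_family_def by blast
  qed
qed

lemma exists_MAD_GG: "\<exists>M. MAD_family M \<and> GG \<subseteq> M"
proof -
  let ?F = "{A. almost_disjoint_family A \<and> GG \<subseteq> A}"
  have "\<forall>C\<in>chains ?F. \<exists>U\<in>?F. \<forall>X\<in>C. X \<subseteq> U"
  proof
    fix C assume C: "C \<in> chains ?F"
    show "\<exists>U\<in>?F. \<forall>X\<in>C. X \<subseteq> U"
    proof (cases "C = {}")
      case True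
      then show ?thesis using GG_AD by blast
    next
      case False
      have "almost_disjoint_family (\<Union>C)" by (rule AD_union_chain[OF C False])
      moreover have "GG \<subseteq> \<Union>C" using C False unfolding chains_def by blast
      ultimately show ?thesis by blast
    qed
  qed
  then obtain M where M: "M \<in> ?F" and max: "\<forall>X\<in>?F. M \<subseteq> X \<longrightarrow> X = M"
    using Zorn_Lemma2[of ?F] by blast
  have "infinite M"
  proof
    assume "finite M"
    moreover have "range Pk \<subseteq> M" using M unfolding GG_def by blast
    ultimately have "finite (range Pk)" by (rule finite_subset[rotated])
    then have "finite (UNIV :: nat set)" using Pk_inj by (rule finite_imageD)
    then show False by simp
  qed
  moreover have "\<forall>B. almost_disjoint_family (insert B M) \<longrightarrow> B \<in> M"
  proof (intro allI impI)
    fix B assume "almost_disjoint_family (insert B M)"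
    moreover have "GG \<subseteq> insert B M" using M by blast
    ultimately have "insert B M \<in> ?F" by blast
    then have "insert B M = M" using max by blast
    then show "B \<in> M" by blast
  qed
  ultimately have "MAD_family M" using M unfolding MAD_family_def by blast
  then show ?thesis using M by blast
qed

theorem mainTheorem7:
  shows "\<exists>\<A>. MAD_family \<A> \<and> \<not> katetov_le (generated_ideal \<A>) UNIV conv_ideal Q01"
proof -
  obtain M where M: "MAD_family M" "GG \<subseteq> M" using exists_MAD_GG by blast
  have "\<not> katetov_le (generated_ideal M) UNIV conv_ideal Q01"
  proof
    assume "katetov_le (generated_ideal M) UNIV conv_ideal Q01"
    then obtain f :: "rat \<Rightarrow> nat" where f: "\<forall>A\<in>generated_ideal M. {y\<in>Q01. f y \<in> A} \<in> conv_ideal"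
      unfolding katetov_le_def by blast
    have pf: "pre f A \<in> conv_ideal" if "A \<in> generated_ideal M" for A
      using f that unfolding pre_def by blast
    have "good f" unfolding good_def
    proof (intro allI impI)
      fix F :: "nat set" assume "finite F"
      then have "F \<in> generated_ideal M" unfolding generated_ideal_def
        by (intro CollectI exI[of _ "{}"]) simp
      then show "pre f F \<in> conv_ideal" by (rule pf)
    qed
    then obtain a where a: "a \<in> GG" "pre f a \<notin> conv_ideal" using GG_good by blast
    have "a \<in> generated_ideal M" unfolding generated_ideal_def
      using a(1) M(2) by (intro CollectI exI[of _ "{a}"]) auto
    then show False using pf a(2) by blast
  qed
  then show ?thesis using M(1) by blast
qed

end
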